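(* Let $s\geq 2$ and let $n_1>n_2>\cdots>n_s\geq 2$ be integers, and $S=\{n_1,\ldots,n_s\}$. Let $\delta_3(S)$ denote the minimum number of vertices of a $3$-uniform bi-hypergraph $\mathcal H=(X,\mathcal B)$ which is a one-realization of $S$. Then $\delta_3(S)\geq 2n_1-\left\lfloor \frac{n_2+1}{n_1}\right\rfloor$.
   Context: A bi-hypergraph is a pair $\mathcal H=(X,\mathcal B)$ with $X$ finite and $\mathcal B$ a family of subsets of $X$ (each member serving simultaneously as a $\mathcal C$-edge and a $\mathcal D$-edge); it is $3$-uniform if every member of $\mathcal B$ has exactly $3$ elements. A strict $k$-coloring is a partition of $X$ into exactly $k$ nonempty classes such that every edge of $\mathcal B$ contains two vertices of a common class and two vertices of distinct classes. The feasible set $\Phi(\mathcal H)$ is the set of $k$ admitting a strict $k$-coloring. The chromatic spectrum is $(r_1,\ldots,r_{\bar\chi})$ with $r_k$ the number of strict $k$-colorings (as partitions) and $\bar\chi=\max\Phi(\mathcal H)$. $\mathcal H$ is a one-realization of $S$ if $\Phi(\mathcal H)=S$ and each $r_k\in\{0,1\}$. *)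

theory Defs
  imports Complex_Main "HOL-Library.Disjoint_Sets"
begin

definition bihypergraph :: "'a set \<Rightarrow> 'a set set \<Rightarrow> bool" where
  "bihypergraph X B \<longleftrightarrow> finite X \<and> (\<forall>E\<in>B. E \<subseteq> X)"

definition uniform3 :: "'a set set \<Rightarrow> bool" where
  "uniform3 B \<longleftrightarrow> (\<forall>E\<in>B. card E = 3)"

definition strict_coloring :: "'a set \<Rightarrow> 'a set set \<Rightarrow> nat \<Rightarrow> 'a set set \<Rightarrow> bool" where
  "strict_coloring X B k P \<longleftrightarrow>
     partition_on X P \<and> card P = k \<and>
     (\<forall>E\<in>B.
        (\<exists>x\<in>E. \<exists>y\<in>E. x \<noteq> y \<and> (\<exists>C\<in>P. x \<in> C \<and> y \<in> C)) \<and>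
        (\<exists>x\<in>E. \<exists>y\<in>E. \<not> (\<exists>C\<in>P. x \<in> C \<and> y \<in> C)))"

definition feasible_set :: "'a set \<Rightarrow> 'a set set \<Rightarrow> nat set" where
  "feasible_set X B = {k. \<exists>P. strict_coloring X B k P}"

definition num_colorings :: "'a set \<Rightarrow> 'a set set \<Rightarrow> nat \<Rightarrow> nat" where
  "num_colorings X B k = card {P. strict_coloring X B k P}"

definition one_realization :: "'a set \<Rightarrow> 'a set set \<Rightarrow> nat set \<Rightarrow> bool" where
  "one_realization X B S \<longleftrightarrow>
     feasible_set X B = S \<and> (\<forall>k. num_colorings X B k \<in> {0, 1})"

end

theory Submission
  imports Defs
begin

lemma sc_uniq:
  assumes "one_realization X B S" "finite X"
    "strict_coloring X B k P1" "strict_coloring X B k P2"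
  shows "P1 = P2"
proof (rule ccontr)
  assume ne: "P1 \<noteq> P2"
  have fin: "finite {P. strict_coloring X B k P}"
    by (rule finite_subset[of _ "Pow (Pow X)"])
       (auto simp: strict_coloring_def partition_on_def assms(2))
  have "{P1,P2} \<subseteq> {P. strict_coloring X B k P}" using assms by auto
  hence "card {P1,P2} \<le> card {P. strict_coloring X B k P}" using fin by (rule card_mono[rotated])
  moreover have "num_colorings X B k \<in> {0,1}" using assms(1) by (simp add: one_realization_def)
  hence "card {P. strict_coloring X B k P} \<le> 1" by (auto simp: num_colorings_def)
  ultimately show False using ne by simp
qed

lemma disjP: "partition_on X P \<Longrightarrow> C \<in> P \<Longrightarrow> D \<in> P \<Longrightarrow> x \<in> C \<Longrightarrow> x \<in> D \<Longrightarrow> C = D"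
  unfolding partition_on_def disjoint_def by blast

lemma sc_merge:
  assumes sc: "strict_coloring X B k P" and u: "uniform3 B"
    and a: "{a} \<in> P" and b: "{b} \<in> P" and ab: "a \<noteq> b"
    and fX: "finite X"
  shows "strict_coloring X B (k - 1) (insert {a,b} (P - {{a},{b}}))"
proof -
  let ?Q = "insert {a,b} (P - {{a},{b}})"
  have pP: "partition_on X P" and cP: "card P = k" using sc by (auto simp: strict_coloring_def)
  have ab_notin: "{a,b} \<notin> P"
  proof
    assume "{a,b} \<in> P"
    with a disjP[OF pP, of "{a}" "{a,b}" a] have "{a} = {a,b}" by auto
    with ab show False by auto
  qed
  have pQ: "partition_on X ?Q"
  proof (rule partition_onI)
    show "\<Union>?Q = X" using partition_onD1[OF pP] a b by auto
    show "{} \<notin> ?Q" using partition_onD3[OF pP] by auto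
    have dP: "\<And>p q. p \<in> P \<Longrightarrow> q \<in> P \<Longrightarrow> p \<noteq> q \<Longrightarrow> p \<inter> q = {}"
      using partition_onD2[OF pP] by (auto simp: disjoint_def pairwise_def disjnt_def)
    have nab: "\<And>q. q \<in> P \<Longrightarrow> q \<noteq> {a} \<Longrightarrow> q \<noteq> {b} \<Longrightarrow> a \<notin> q \<and> b \<notin> q"
    proof -
      fix q assume q: "q \<in> P" "q \<noteq> {a}" "q \<noteq> {b}"
      have "{a} \<inter> q = {}" using dP[OF a q(1)] q(2) by auto
      moreover have "{b} \<inter> q = {}" using dP[OF b q(1)] q(3) by auto
      ultimately show "a \<notin> q \<and> b \<notin> q" by auto
    qed
    fix p q assume pq: "p \<in> ?Q" "q \<in> ?Q" "p \<noteq> q"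
    show "disjnt p q"
    proof (cases "p = {a,b}")
      case True
      hence "q \<in> P" "q \<noteq> {a}" "q \<noteq> {b}" using pq by auto
      thus ?thesis using nab[of q] True by (auto simp: disjnt_def)
    next
      case False
      hence p: "p \<in> P" "p \<noteq> {a}" "p \<noteq> {b}" using pq by auto
      show ?thesis
      proof (cases "q = {a,b}")
        case True
        thus ?thesis using nab[OF p] by (auto simp: disjnt_def)
      next
        case False
        hence "q \<in> P" using pq by auto
        thus ?thesis using dP[OF p(1) _ pq(3)] by (simp add: disjnt_def)
      qed
    qed
  qed



  have "finite P" using finite_elements[OF fX pP] .
  have cQ: "card ?Q = k - 1"
  proof -
    have "card (P - {{a},{b}}) = k - 2" using cP a b ab \<open>finite P\<close>
      by (simp add: card_Diff_subset doubleton_eq_iff)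
    moreover have "k \<ge> 2" using cP a b ab \<open>finite P\<close>
    proof -
      have "card {{a},{b}} \<le> card P" using a b \<open>finite P\<close> by (intro card_mono) auto
      thus ?thesis using ab cP by simp
    qed
    ultimately show ?thesis using ab_notin \<open>finite P\<close> by simp
  qed
  have edges: "\<forall>E\<in>B.
        (\<exists>x\<in>E. \<exists>y\<in>E. x \<noteq> y \<and> (\<exists>C\<in>?Q. x \<in> C \<and> y \<in> C)) \<and>
        (\<exists>x\<in>E. \<exists>y\<in>E. \<not> (\<exists>C\<in>?Q. x \<in> C \<and> y \<in> C))"
  proof
    fix E assume E: "E \<in> B"
    from sc E obtain x y C where xy: "x \<in> E" "y \<in> E" "x \<noteq> y" "C \<in> P" "x \<in> C" "y \<in> C"
      by (auto simp: strict_coloring_def)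
    from sc E obtain u v where uv: "u \<in> E" "v \<in> E" "\<not> (\<exists>C\<in>P. u \<in> C \<and> v \<in> C)"
      by (auto simp: strict_coloring_def)
    have "C \<noteq> {a}" "C \<noteq> {b}" using xy by auto
    hence CQ: "C \<in> ?Q" using xy by auto
    have "x \<noteq> a" using disjP[OF pP a xy(4), of x] xy \<open>C \<noteq> {a}\<close> by auto
    moreover have "x \<noteq> b" using disjP[OF pP b xy(4), of x] xy \<open>C \<noteq> {b}\<close> by auto
    moreover have "y \<noteq> a" using disjP[OF pP a xy(4), of y] xy \<open>C \<noteq> {a}\<close> by auto
    moreover have "y \<noteq> b" using disjP[OF pP b xy(4), of y] xy \<open>C \<noteq> {b}\<close> by auto
    ultimately have xab: "x \<notin> {a,b}" "y \<notin> {a,b}" by auto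
    have c3: "card E = 3" using u E by (simp add: uniform3_def)
    have "\<not> (\<exists>D\<in>?Q. u \<in> D \<and> v \<in> D)"
    proof
      assume "\<exists>D\<in>?Q. u \<in> D \<and> v \<in> D"
      then obtain D where D: "D \<in> ?Q" "u \<in> D" "v \<in> D" by blast
      have "D = {a,b}" using D uv by auto
      hence "u \<noteq> v" using uv a b D by auto
      hence "{u,v} = {a,b}" using D \<open>D = {a,b}\<close> by auto
      hence "{a,b,x,y} \<subseteq> E" using uv xy by auto
      hence "card {a,b,x,y} \<le> card E" using c3 by (intro card_mono) (auto intro: card_ge_0_finite)
      moreover have "card {a,b,x,y} = 4" using xab xy ab by auto
      ultimately show False using c3 by simp
    qed
    hence h2: "\<exists>x\<in>E. \<exists>y\<in>E. \<not> (\<exists>C\<in>?Q. x \<in> C \<and> y \<in> C)"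
      using uv(1,2) by blast
    have h1: "\<exists>x\<in>E. \<exists>y\<in>E. x \<noteq> y \<and> (\<exists>C\<in>?Q. x \<in> C \<and> y \<in> C)"
      using xy(1,2,3,5,6) CQ by blast
    show "(\<exists>x\<in>E. \<exists>y\<in>E. x \<noteq> y \<and> (\<exists>C\<in>?Q. x \<in> C \<and> y \<in> C)) \<and>
        (\<exists>x\<in>E. \<exists>y\<in>E. \<not> (\<exists>C\<in>?Q. x \<in> C \<and> y \<in> C))"
      using h1 h2 by (rule conjI)
  qed
  show ?thesis using pQ cQ edges by (simp add: strict_coloring_def)
qed
lemma sc_two:
  assumes sc: "strict_coloring X B k P" and u: "uniform3 B" and bh: "bihypergraph X B"
    and small: "\<forall>C\<in>P. card C \<le> 2" and AX: "A \<subseteq> X" and Ane: "A \<noteq> {}" and AnX: "A \<noteq> X"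
    and spl: "\<forall>C\<in>P. card C = 2 \<longrightarrow> C \<inter> A \<noteq> {} \<and> \<not> C \<subseteq> A"
  shows "strict_coloring X B 2 {A, X - A}"
proof -
  have pP: "partition_on X P" using sc by (auto simp: strict_coloring_def)
  have fX: "finite X" using bh by (simp add: bihypergraph_def)
  have p2: "partition_on X {A, X - A}"
    by (rule partition_onI) (use AX Ane AnX in \<open>auto simp: disjnt_def\<close>)
  have "A \<noteq> X - A" using Ane by auto
  hence c2: "card {A, X - A} = 2" by simp
  have edges: "\<forall>E\<in>B.
        (\<exists>x\<in>E. \<exists>y\<in>E. x \<noteq> y \<and> (\<exists>C\<in>{A, X - A}. x \<in> C \<and> y \<in> C)) \<and>
        (\<exists>x\<in>E. \<exists>y\<in>E. \<not> (\<exists>C\<in>{A, X - A}. x \<in> C \<and> y \<in> C))"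
  proof
    fix E assume E: "E \<in> B"
    have EX: "E \<subseteq> X" using bh E by (simp add: bihypergraph_def)
    have "card E = 3" using u E by (simp add: uniform3_def)
    then obtain p q r where pqr: "E = {p,q,r}" "p \<noteq> q" "q \<noteq> r" "p \<noteq> r"
      by (auto simp: card_3_iff)
    have part1: "\<exists>x\<in>E. \<exists>y\<in>E. x \<noteq> y \<and> (\<exists>C\<in>{A, X - A}. x \<in> C \<and> y \<in> C)"
      using pqr EX by (cases "p \<in> A"; cases "q \<in> A"; cases "r \<in> A") auto
    from sc E obtain x y C where xy: "x \<in> E" "y \<in> E" "x \<noteq> y" "C \<in> P" "x \<in> C" "y \<in> C"
      by (auto simp: strict_coloring_def)
    have CX: "C \<subseteq> X" using pP xy(4) by (auto simp: partition_on_def)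
    have "card {x,y} \<le> card C" using xy CX fX by (intro card_mono) (auto intro: finite_subset)
    hence "card C = 2" using small xy by auto
    hence "C = {x,y}" using xy CX fX
      by (metis card_2_iff doubleton_eq_iff insertE insert_absorb insert_commute insert_not_empty)
    hence "(x \<in> A) \<noteq> (y \<in> A)" using spl xy \<open>card C = 2\<close> by auto
    hence "\<not> (\<exists>C\<in>{A, X - A}. x \<in> C \<and> y \<in> C)" by auto
    with part1 xy show "(\<exists>x\<in>E. \<exists>y\<in>E. x \<noteq> y \<and> (\<exists>C\<in>{A, X - A}. x \<in> C \<and> y \<in> C)) \<and>
        (\<exists>x\<in>E. \<exists>y\<in>E. \<not> (\<exists>C\<in>{A, X - A}. x \<in> C \<and> y \<in> C))" by blast
  qed
  show ?thesis using p2 c2 edges by (simp add: strict_coloring_def)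
qed

lemma split_single: "K \<inter> A = {z} \<Longrightarrow> card K = 2 \<Longrightarrow> K \<inter> A \<noteq> {} \<and> \<not> K \<subseteq> A"
proof
  assume h: "K \<inter> A = {z}" "card K = 2"
  show "K \<inter> A \<noteq> {}" using h by simp
  show "\<not> K \<subseteq> A"
  proof
    assume "K \<subseteq> A"
    hence "K = {z}" using h(1) by blast
    thus False using h(2) by simp
  qed
qed

lemma small_contra:
  assumes sc: "strict_coloring X B k P" and u: "uniform3 B" and bh: "bihypergraph X B"
    and one: "one_realization X B S"
    and small: "\<forall>C\<in>P. card C \<le> 2" and D: "D \<in> P" "card D = 2" and C: "C \<in> P" "C \<noteq> D"
  shows False
proof -
  have pP: "partition_on X P" using sc by (auto simp: strict_coloring_def)
  have fX: "finite X" using bh by (simp add: bihypergraph_def)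
  obtain d1 d2 where dd: "D = {d1,d2}" "d1 \<noteq> d2" using D by (auto simp: card_2_iff)
  have "\<forall>K\<in>P. \<exists>x. x \<in> K" using partition_onD3[OF pP] by (metis ex_in_conv)
  then obtain f where f: "\<forall>K\<in>P. f K \<in> K" by metis
  define g where "g = f(D := d1)"
  have g: "\<And>K. K \<in> P \<Longrightarrow> g K \<in> K" using f dd by (auto simp: g_def)
  have gD: "g D = d1" by (simp add: g_def)
  define A1 where "A1 = g ` P"
  define A2 where "A2 = insert d2 (A1 - {d1})"
  have KX: "\<And>K. K \<in> P \<Longrightarrow> K \<subseteq> X" using pP by (auto simp: partition_on_def)
  have key: "\<And>K. K \<in> P \<Longrightarrow> A1 \<inter> K = {g K}"
  proof -
    fix K assume K: "K \<in> P"
    show "A1 \<inter> K = {g K}"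
    proof
      show "A1 \<inter> K \<subseteq> {g K}"
      proof
        fix z assume "z \<in> A1 \<inter> K"
        then obtain K' where "K' \<in> P" "z = g K'" "z \<in> K" by (auto simp: A1_def)
        with g[of K'] disjP[OF pP K \<open>K' \<in> P\<close>] show "z \<in> {g K}" by auto
      qed
      show "{g K} \<subseteq> A1 \<inter> K" using K g by (auto simp: A1_def)
    qed
  qed
  have A1X: "A1 \<subseteq> X" using g KX by (auto simp: A1_def)
  have d1A1: "d1 \<in> A1" using D gD by (auto simp: A1_def intro!: image_eqI[of _ _ D])
  have d2A1: "d2 \<notin> A1" using key[OF D(1)] gD dd by auto
  have DX: "D \<subseteq> X" using KX D by auto
  have A2X: "A2 \<subseteq> X" using A1X DX dd by (auto simp: A2_def)
  have key2: "\<And>K. K \<in> P \<Longrightarrow> K \<noteq> D \<Longrightarrow> A2 \<inter> K = A1 \<inter> K"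
  proof -
    fix K assume K: "K \<in> P" "K \<noteq> D"
    have "d1 \<notin> K" "d2 \<notin> K" using disjP[OF pP K(1) D(1)] dd K by auto
    thus "A2 \<inter> K = A1 \<inter> K" by (auto simp: A2_def)
  qed
  have key2D: "A2 \<inter> D = {d2}" using key[OF D(1)] gD dd by (auto simp: A2_def)
  have s1: "strict_coloring X B 2 {A1, X - A1}"
  proof (rule sc_two[OF sc u bh small A1X])
    show "A1 \<noteq> {}" using d1A1 by auto
    show "A1 \<noteq> X" using d2A1 DX dd by auto
    show "\<forall>C\<in>P. card C = 2 \<longrightarrow> C \<inter> A1 \<noteq> {} \<and> \<not> C \<subseteq> A1"
    proof (intro ballI impI)
      fix K assume K: "K \<in> P" "card K = 2"
      have "K \<inter> A1 = {g K}" using key[OF K(1)] by auto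
      thus "K \<inter> A1 \<noteq> {} \<and> \<not> K \<subseteq> A1" by (rule split_single[OF _ K(2)])
    qed
  qed
  have s2: "strict_coloring X B 2 {A2, X - A2}"
  proof (rule sc_two[OF sc u bh small A2X])
    show "A2 \<noteq> {}" by (auto simp: A2_def)
    show "A2 \<noteq> X" using key2D DX dd by auto
    show "\<forall>C\<in>P. card C = 2 \<longrightarrow> C \<inter> A2 \<noteq> {} \<and> \<not> C \<subseteq> A2"
    proof (intro ballI impI)
      fix K assume K: "K \<in> P" "card K = 2"
      obtain z where "K \<inter> A2 = {z}"
        using key[OF K(1)] key2[OF K(1)] key2D by (cases "K = D") auto
      thus "K \<inter> A2 \<noteq> {} \<and> \<not> K \<subseteq> A2" by (rule split_single[OF _ K(2)])
    qed
  qed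
  have "{A1, X - A1} = {A2, X - A2}" using sc_uniq[OF one fX s1 s2] .
  moreover have "A1 \<noteq> A2" using d1A1 dd by (auto simp: A2_def)
  moreover have "A1 \<noteq> X - A2"
  proof -
    have "g C \<in> A1" using C by (auto simp: A1_def)
    moreover have "g C \<noteq> d1" using g[OF C(1)] disjP[OF pP C(1) D(1)] dd C(2) by auto
    ultimately have "g C \<in> A2" by (auto simp: A2_def)
    thus ?thesis using \<open>g C \<in> A1\<close> by auto
  qed
  ultimately show False
  proof -
    assume eq: "{A1, X - A1} = {A2, X - A2}" and n1: "A1 \<noteq> A2" and n2: "A1 \<noteq> X - A2"
    have "A1 \<in> {A2, X - A2}" using eq by (metis insertI1)
    thus False using n1 n2 by simp
  qed
qed

lemma mono_n:
  assumes "\<And>i. 1 \<le> i \<Longrightarrow> i < s \<Longrightarrow> n i > n (Suc i)"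
  shows "1 \<le> i \<Longrightarrow> i \<le> j \<Longrightarrow> j \<le> s \<Longrightarrow> n j \<le> (n i :: nat)"
proof (induction j)
  case 0 thus ?case by simp
next
  case (Suc j)
  show ?case
  proof (cases "i = Suc j")
    case True thus ?thesis by simp
  next
    case False
    hence "i \<le> j" using Suc.prems by simp
    hence "n j \<le> n i" using Suc by simp
    moreover have "n (Suc j) < n j" using assms[of j] Suc.prems \<open>i \<le> j\<close> by simp
    ultimately show ?thesis by simp
  qed
qed

theorem lemma2p1:
  fixes s :: nat and n :: "nat \<Rightarrow> nat" and X :: "'a set" and B :: "'a set set"
  assumes "s \<ge> 2"
    and "\<And>i. 1 \<le> i \<Longrightarrow> i < s \<Longrightarrow> n i > n (Suc i)"
    and "n s \<ge> 2"
    and "bihypergraph X B" and "uniform3 B"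
    and "one_realization X B (n ` {1..s})"
  shows "int (card X) \<ge> 2 * int (n 1) - \<lfloor>real (n 2 + 1) / real (n 1)\<rfloor>"
proof -
  note bh = assms(4) and u = assms(5) and one = assms(6)
  have fX: "finite X" using bh by (simp add: bihypergraph_def)
  have mono: "\<And>i j. 1 \<le> i \<Longrightarrow> i \<le> j \<Longrightarrow> j \<le> s \<Longrightarrow> n j \<le> n i"
    using mono_n[of s n] assms(2) by blast
  have n21: "n 2 < n 1" using assms(2)[of 1] assms(1) by (simp add: numeral_2_eq_2)
  have n2: "n 2 \<ge> 2" using mono[of 2 s] assms(1,3) by simp
  have n13: "n 1 \<ge> 3" using n21 n2 by simp
  have feas: "feasible_set X B = n ` {1..s}" using one by (simp add: one_realization_def)
  have "n 1 \<in> feasible_set X B" using feas assms(1) by auto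
  then obtain P where sc: "strict_coloring X B (n 1) P" by (auto simp: feasible_set_def)
  have pP: "partition_on X P" and cP: "card P = n 1" using sc by (auto simp: strict_coloring_def)
  have fP: "finite P" using finite_elements[OF fX pP] .
  have KX: "\<And>K. K \<in> P \<Longrightarrow> K \<subseteq> X" using pP by (auto simp: partition_on_def)
  have fK: "\<And>K. K \<in> P \<Longrightarrow> finite K" using KX fX finite_subset by blast
  have Kne: "\<And>K. K \<in> P \<Longrightarrow> card K \<ge> 1"
    using partition_onD3[OF pP] fK by (metis card_0_eq less_one not_le)
  define T where "T = {C\<in>P. card C = 1}"
  have fT: "finite T" using fP by (simp add: T_def)
  have T3: "card T \<le> 2"
  proof (rule ccontr)
    assume "\<not> card T \<le> 2"
    then obtain T' where "T' \<subseteq> T" "card T' = 3"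
      by (metis obtain_subset_with_card_n not_le Suc_leI numeral_3_eq_3 numeral_2_eq_2)
    then obtain C1 C2 C3 where C: "C1 \<in> T" "C2 \<in> T" "C3 \<in> T" "C1 \<noteq> C2" "C2 \<noteq> C3" "C1 \<noteq> C3"
      by (auto simp: card_3_iff)
    then obtain a b c where abc: "C1 = {a}" "C2 = {b}" "C3 = {c}"
      by (auto simp: T_def card_1_singleton_iff)
    have inP: "{a} \<in> P" "{b} \<in> P" "{c} \<in> P" using C abc by (auto simp: T_def)
    have d: "a \<noteq> b" "a \<noteq> c" "b \<noteq> c" using C abc by auto
    have "insert {a,b} (P - {{a},{b}}) = insert {a,c} (P - {{a},{c}})"
      using sc_uniq[OF one fX sc_merge[OF sc u inP(1) inP(2) d(1) fX] sc_merge[OF sc u inP(1) inP(3) d(2) fX]] .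
    hence "{a,b} \<in> insert {a,c} (P - {{a},{c}})" by auto
    moreover have "{a,b} \<notin> P" using disjP[OF pP inP(1), of "{a,b}" a] d by auto
    ultimately show False using d by (auto simp: doubleton_eq_iff)
  qed
  have big: "\<exists>C0\<in>P. card C0 \<ge> 3"
  proof (rule ccontr)
    assume "\<not> ?thesis"
    hence small: "\<forall>C\<in>P. card C \<le> 2" by auto
    have "\<exists>D\<in>P. card D = 2"
    proof (rule ccontr)
      assume "\<not> ?thesis"
      hence "T = P" using small Kne by (auto simp: T_def) (metis le_antisym le_Suc_eq numeral_2_eq_2 One_nat_def)
      thus False using T3 cP n13 by simp
    qed
    then obtain D where D: "D \<in> P" "card D = 2" by blast
    have "card (P - {D}) \<ge> 1" using cP n13 D fP by (simp add: card_Diff_singleton)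
    then obtain C where "C \<in> P - {D}" by (metis card.empty ex_in_conv not_one_le_zero)
    thus False using small_contra[OF sc u bh one small D] by auto
  qed
  then obtain C0 where C0: "C0 \<in> P" "card C0 \<ge> 3" by blast
  have cX: "card X = (\<Sum>C\<in>P. card C)" using product_partition[OF pP fK] .
  have sT: "card T = (\<Sum>C\<in>P. if card C = 1 then 1 else 0)"
    unfolding T_def using fP by (simp add: sum.inter_filter[symmetric])
  have "(\<Sum>C\<in>P. 2 + (if C = C0 then 1 else 0)) \<le> (\<Sum>C\<in>P. card C + (if card C = 1 then 1 else 0))"
  proof (rule sum_mono)
    fix C assume "C \<in> P"
    thus "2 + (if C = C0 then 1 else 0) \<le> card C + (if card C = 1 then 1 else (0::nat))"
      using Kne[of C] C0 by auto
  qed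
  moreover have "(\<Sum>C\<in>P. 2 + (if C = C0 then 1 else 0)) = 2 * n 1 + (1::nat)"
  proof -
    have "(\<Sum>C\<in>P. 2 + (if C = C0 then 1 else 0)) = (\<Sum>C\<in>P. (2::nat)) + (\<Sum>C\<in>P. if C = C0 then 1 else 0)"
      by (rule sum.distrib)
    also have "\<dots> = 2 * n 1 + 1" using fP C0 cP by (simp add: sum.delta)
    finally show ?thesis .
  qed
  moreover have "(\<Sum>C\<in>P. card C + (if card C = 1 then 1 else 0)) = card X + card T"
    using cX sT by (simp add: sum.distrib)
  ultimately have cnt: "card X + card T \<ge> 2 * n 1 + 1" by simp
  have fl0: "\<lfloor>real (n 2 + 1) / real (n 1)\<rfloor> \<ge> 0" by simp
  show ?thesis
  proof (cases "card T \<le> 1")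
    case True
    thus ?thesis using cnt fl0 by linarith
  next
    case False
    hence "card T = 2" using T3 by simp
    then obtain C1 C2 where C: "C1 \<in> T" "C2 \<in> T" "C1 \<noteq> C2"
      by (auto simp: card_2_iff)
    then obtain a b where ab: "C1 = {a}" "C2 = {b}"
      by (auto simp: T_def card_1_singleton_iff)
    have inP: "{a} \<in> P" "{b} \<in> P" using C ab by (auto simp: T_def)
    have "a \<noteq> b" using C ab by auto
    have "n 1 - 1 \<in> feasible_set X B"
      using sc_merge[OF sc u inP \<open>a \<noteq> b\<close> fX] by (auto simp: feasible_set_def)
    then obtain j where j: "j \<in> {1..s}" "n j = n 1 - 1" using feas by auto
    have "j \<noteq> 1" using j n13 by auto
    hence "n j \<le> n 2" using mono[of 2 j] j by auto
    hence "n 2 + 1 = n 1" using j n21 by simp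
    hence "\<lfloor>real (n 2 + 1) / real (n 1)\<rfloor> = 1" using n13 by simp
    thus ?thesis using cnt \<open>card T = 2\<close> by linarith
  qed
qed

end
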